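(* Let $G$ be a simple graph whose vertices are among the variables of $S=\mathbb{K}[x_1,\dots,x_n]$, $\mathbb{K}$ a field. If $G$ is co-planar, i.e. the complement graph $\overline{G}$ is planar, then $\operatorname{sreg}(S/I(G))\le 3$.
   Context: $I(G)=(xy : \{x,y\}\in E(G))$ is the edge ideal. Stanley regularity: for a squarefree monomial ideal $I\subset S$, a squarefree Stanley decomposition of $S/I$ is a decomposition $S/I=\bigoplus_{i=1}^r u_i\mathbb{K}[Z_i]$ as $\mathbb{K}$-vector spaces, where $Z_i\subseteq\{x_1,\dots,x_n\}$, $u_i$ are (images of) squarefree monomials with $\operatorname{supp}(u_i)\subseteq Z_i$, and each $u_i\mathbb{K}[Z_i]$ is free over $\mathbb{K}[Z_i]$. Its Stanley regularity is $\max_i\deg(u_i)$, and $\operatorname{sreg}(S/I)$ is the minimum over all such decompositions. *)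

theory Defs
  imports "HOL-Analysis.Analysis" "HOL-Library.Poly_Mapping"
begin

text \<open>The polynomial ring S = K[x_v : v in 'v] over a field K, with a finite type 'v of
variables (so n = CARD('v)).\<close>

type_synonym ('v, 'k) mpoly = "('v \<Rightarrow>\<^sub>0 nat) \<Rightarrow>\<^sub>0 'k"

definition var :: "'v \<Rightarrow> ('v, 'k::comm_ring_1) mpoly" where
  "var v = Poly_Mapping.single (Poly_Mapping.single v 1) 1"

definition sqfree_mon :: "'v set \<Rightarrow> ('v, 'k::comm_ring_1) mpoly" where
  "sqfree_mon U = (\<Prod>v\<in>U. var v)"

definition simple_graph :: "'v set \<Rightarrow> 'v set set \<Rightarrow> bool" where
  "simple_graph V E \<longleftrightarrow> finite V \<and> (\<forall>e\<in>E. e \<subseteq> V \<and> card e = 2)"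

definition edge_ideal :: "'v set set \<Rightarrow> ('v, 'k::comm_ring_1) mpoly set" where
  "edge_ideal E = {p. \<exists>q. p = (\<Sum>e\<in>E. q e * sqfree_mon e)}"

definition subring_vars :: "'v set \<Rightarrow> ('v, 'k::comm_ring_1) mpoly set" where
  "subring_vars Z = {p :: (_, _) mpoly. \<forall>m\<in>Poly_Mapping.keys p. Poly_Mapping.keys m \<subseteq> Z}"

text \<open>A squarefree Stanley decomposition of S/I(G): a list of pairs (U_i, Z_i), where
u_i is the squarefree monomial with support U_i \<subseteq> Z_i, such that the images of the
spaces u_i K[Z_i] in S/I span S/I, their sum is direct, and each u_i K[Z_i] is free
over K[Z_i] (multiplication by u_i is injective from K[Z_i] to S/I).\<close>
definition sq_stanley_decomp ::
  "'k::field itself \<Rightarrow> 'v set set \<Rightarrow> ('v set \<times> 'v set) list \<Rightarrow> bool" where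
  "sq_stanley_decomp _ E ds \<longleftrightarrow>
     (\<forall>i<length ds. fst (ds ! i) \<subseteq> snd (ds ! i)) \<and>
     (\<forall>f :: ('v, 'k) mpoly. \<exists>g. (\<forall>i<length ds. \<exists>h\<in>subring_vars (snd (ds ! i)).
           g i = sqfree_mon (fst (ds ! i)) * h) \<and>
         f - (\<Sum>i<length ds. g i) \<in> edge_ideal E) \<and>
     (\<forall>g :: nat \<Rightarrow> ('v, 'k) mpoly. (\<forall>i<length ds. \<exists>h\<in>subring_vars (snd (ds ! i)).
           g i = sqfree_mon (fst (ds ! i)) * h) \<and>
         (\<Sum>i<length ds. g i) \<in> edge_ideal E \<longrightarrow> (\<forall>i<length ds. g i \<in> edge_ideal E)) \<and>
     (\<forall>i<length ds. \<forall>h :: ('v, 'k) mpoly. h \<in> subring_vars (snd (ds ! i)) \<and>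
         sqfree_mon (fst (ds ! i)) * h \<in> edge_ideal E \<longrightarrow> h = 0)"

definition stanley_reg :: "('v set \<times> 'v set) list \<Rightarrow> nat" where
  "stanley_reg ds = Max (insert 0 ((\<lambda>p. card (fst p)) ` set ds))"

definition sreg :: "'k::field itself \<Rightarrow> 'v set set \<Rightarrow> nat" where
  "sreg K E = (LEAST r. \<exists>ds. sq_stanley_decomp K E ds \<and> stanley_reg ds = r)"

definition complement_edges :: "'v set \<Rightarrow> 'v set set \<Rightarrow> 'v set set" where
  "complement_edges V E = {{a, b} | a b. a \<in> V \<and> b \<in> V \<and> a \<noteq> b \<and> {a, b} \<notin> E}"

definition planar :: "'v set \<Rightarrow> 'v set set \<Rightarrow> bool" where
  "planar V E \<longleftrightarrow> (\<exists>(pos :: 'v \<Rightarrow> real \<times> real) (\<gamma> :: 'v set \<Rightarrow> real \<Rightarrow> real \<times> real).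
     inj_on pos V \<and>
     (\<forall>e\<in>E. arc (\<gamma> e) \<and> {pathstart (\<gamma> e), pathfinish (\<gamma> e)} = pos ` e \<and>
              path_image (\<gamma> e) \<inter> pos ` V = pos ` e) \<and>
     (\<forall>e\<in>E. \<forall>e'\<in>E. e \<noteq> e' \<longrightarrow> path_image (\<gamma> e) \<inter> path_image (\<gamma> e') = pos ` (e \<inter> e')))"

end

theory Submission
  imports Defs "HOL-Complex_Analysis.Complex_Analysis"
begin

lemma loop_facts:
  fixes p1 p2 :: "real \<Rightarrow> complex"
  assumes "arc p1" "arc p2" "pathstart p1 = a" "pathfinish p1 = b"
    "pathstart p2 = a" "pathfinish p2 = b" "path_image p1 \<inter> path_image p2 = {a,b}"
  shows "simple_path (p1 +++ reversepath p2)"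
    "pathfinish (p1 +++ reversepath p2) = pathstart (p1 +++ reversepath p2)"
    "path_image (p1 +++ reversepath p2) = path_image p1 \<union> path_image p2"
proof -
  show "simple_path (p1 +++ reversepath p2)"
    using assms by (subst simple_path_join_loop_eq) (auto simp: arc_reversepath)
  show "pathfinish (p1 +++ reversepath p2) = pathstart (p1 +++ reversepath p2)"
    using assms by simp
  show "path_image (p1 +++ reversepath p2) = path_image p1 \<union> path_image p2"
    using assms by (simp add: path_image_join)
qed

lemma jordan_facts:
  fixes p1 p2 :: "real \<Rightarrow> complex"
  assumes "arc p1" "arc p2" "pathstart p1 = a" "pathfinish p1 = b"
    "pathstart p2 = a" "pathfinish p2 = b" "path_image p1 \<inter> path_image p2 = {a,b}"
  shows "inside (path_image p1 \<union> path_image p2) \<noteq> {}"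
    "open (inside (path_image p1 \<union> path_image p2))"
    "connected (inside (path_image p1 \<union> path_image p2))"
    "open (outside (path_image p1 \<union> path_image p2))"
    "frontier (inside (path_image p1 \<union> path_image p2)) = path_image p1 \<union> path_image p2"
    "frontier (outside (path_image p1 \<union> path_image p2)) = path_image p1 \<union> path_image p2"
  using Jordan_inside_outside[OF loop_facts(1,2)[OF assms]] loop_facts(3)[OF assms] by auto

lemma arc_mid_point:
  assumes "arc p"
  shows "\<exists>w\<in>path_image p. w \<noteq> pathstart p \<and> w \<noteq> pathfinish p"
proof -
  have "p (1/2) \<noteq> p 0" "p (1/2) \<noteq> p 1"
    using arc_imp_inj_on[OF assms] by (auto dest: inj_onD)
  then show ?thesis
    by (auto simp: path_image_def pathstart_def pathfinish_def)
qed

lemma closure_inside_sub: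
  fixes p1 p2 :: "real \<Rightarrow> complex"
  assumes "arc p1" "arc p2" "pathstart p1 = a" "pathfinish p1 = b"
    "pathstart p2 = a" "pathfinish p2 = b" "path_image p1 \<inter> path_image p2 = {a,b}"
  shows "closure (inside (path_image p1 \<union> path_image p2)) \<subseteq> inside (path_image p1 \<union> path_image p2) \<union> path_image p1 \<union> path_image p2"
  using jordan_facts(5)[OF assms] closure_Un_frontier by auto

lemma connected_sub_open:
  assumes "connected S" "S \<subseteq> A \<union> B" "open A" "open B" "A \<inter> B = {}" "x \<in> S" "x \<in> A"
  shows "S \<subseteq> A"
  using connectedD[OF assms(1), of A B] assms by blast

lemma wn_theta:
  fixes p1 p2 p3 :: "real \<Rightarrow> complex"
  assumes "path p1" "path p2" "path p3" "pathstart p1 = a" "pathfinish p1 = b"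
    "pathstart p2 = a" "pathfinish p2 = b" "pathstart p3 = a" "pathfinish p3 = b"
    "z \<notin> path_image p1" "z \<notin> path_image p2" "z \<notin> path_image p3"
  shows "winding_number (p1 +++ reversepath p3) z =
     winding_number (p1 +++ reversepath p2) z + winding_number (p2 +++ reversepath p3) z"
  using assms by (simp add: winding_number_join winding_number_reversepath)

lemma theta_wlog:
  fixes p1 p2 p3 :: "real \<Rightarrow> complex"
  assumes arcs: "arc p1" "arc p2" "arc p3"
    and ends: "pathstart p1 = a" "pathfinish p1 = b"
    "pathstart p2 = a" "pathfinish p2 = b" "pathstart p3 = a" "pathfinish p3 = b"
    and int: "path_image p1 \<inter> path_image p2 = {a,b}" "path_image p1 \<inter> path_image p3 = {a,b}"
    "path_image p2 \<inter> path_image p3 = {a,b}"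
  shows "path_image p3 \<inter> inside (path_image p1 \<union> path_image p2) \<noteq> {} \<or>
         path_image p2 \<inter> inside (path_image p1 \<union> path_image p3) \<noteq> {} \<or>
         path_image p1 \<inter> inside (path_image p2 \<union> path_image p3) \<noteq> {}"
proof (rule ccontr)
  assume H: "\<not> ?thesis"
  let ?I12 = "inside (path_image p1 \<union> path_image p2)"
  let ?I13 = "inside (path_image p1 \<union> path_image p3)"
  let ?I23 = "inside (path_image p2 \<union> path_image p3)"
  note J12 = jordan_facts[OF arcs(1,2) ends(1-4) int(1)]
  note J13 = jordan_facts[OF arcs(1,3) ends(1,2,5,6) int(2)]
  note J23 = jordan_facts[OF arcs(2,3) ends(3-6) int(3)]
  note L12 = loop_facts[OF arcs(1,2) ends(1-4) int(1)]
  note L13 = loop_facts[OF arcs(1,3) ends(1,2,5,6) int(2)]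
  note L23 = loop_facts[OF arcs(2,3) ends(3-6) int(3)]
  obtain z where z: "z \<in> ?I12" using J12(1) by blast
  have zn: "z \<notin> path_image p1" "z \<notin> path_image p2" "z \<notin> path_image p3"
    using z H inside_no_overlap[of "path_image p1 \<union> path_image p2"] by blast+
  have wn12: "winding_number (p1 +++ reversepath p2) z \<noteq> 0"
    using simple_closed_path_norm_winding_number_inside[OF L12(1)] z L12(3) by fastforce
  have paths: "path p1" "path p2" "path p3" using arcs arc_imp_path by auto
  have sub12: "?I12 \<subseteq> - (path_image p1 \<union> path_image p3)" "?I12 \<subseteq> - (path_image p2 \<union> path_image p3)"
    using H inside_no_overlap[of "path_image p1 \<union> path_image p2"] by blast+
  have "winding_number (p1 +++ reversepath p3) z \<noteq> 0 \<or> winding_number (p2 +++ reversepath p3) z \<noteq> 0"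
    using wn_theta[OF paths ends zn] wn12 by auto
  then show False
  proof
    assume w: "winding_number (p1 +++ reversepath p3) z \<noteq> 0"
    have "z \<notin> outside (path_image p1 \<union> path_image p3)"
      using winding_number_zero_in_outside[of "p1 +++ reversepath p3" z] L13 w simple_path_imp_path by auto
    then have zi: "z \<in> ?I13" using zn inside_Un_outside[of "path_image p1 \<union> path_image p3"] by blast
    have "?I12 \<subseteq> ?I13"
    proof -
      have "?I12 \<subseteq> ?I13 \<union> outside (path_image p1 \<union> path_image p3)"
        using sub12(1) inside_Un_outside[of "path_image p1 \<union> path_image p3"] by blast
      then show ?thesis
        using connected_sub_open[OF J12(3) _ J13(2,4)] z zi by auto
    qed
    moreover obtain w where w: "w \<in> path_image p2" "w \<noteq> a" "w \<noteq> b"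
      using arc_mid_point[OF arcs(2)] ends by auto
    ultimately have "w \<in> closure ?I13"
      using J12(5) closure_mono[of ?I12 ?I13] frontier_closures[of ?I12] by blast
    then have "w \<in> ?I13 \<union> path_image p1 \<union> path_image p3"
      using closure_inside_sub[OF arcs(1,3) ends(1,2,5,6) int(2)] by auto
    then have "w \<in> ?I13" using w int by auto
    then show False using H w by auto
  next
    assume w: "winding_number (p2 +++ reversepath p3) z \<noteq> 0"
    have "z \<notin> outside (path_image p2 \<union> path_image p3)"
      using winding_number_zero_in_outside[of "p2 +++ reversepath p3" z] L23 w simple_path_imp_path by auto
    then have zi: "z \<in> ?I23" using zn inside_Un_outside[of "path_image p2 \<union> path_image p3"] by blast
    have "?I12 \<subseteq> ?I23"
    proof -
      have "?I12 \<subseteq> ?I23 \<union> outside (path_image p2 \<union> path_image p3)"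
        using sub12(2) inside_Un_outside[of "path_image p2 \<union> path_image p3"] by blast
      then show ?thesis
        using connected_sub_open[OF J12(3) _ J23(2,4)] z zi by auto
    qed
    moreover obtain w where w: "w \<in> path_image p1" "w \<noteq> a" "w \<noteq> b"
      using arc_mid_point[OF arcs(1)] ends by auto
    ultimately have "w \<in> closure ?I23"
      using J12(5) closure_mono[of ?I12 ?I23] frontier_closures[of ?I12] by blast
    then have "w \<in> ?I23 \<union> path_image p2 \<union> path_image p3"
      using closure_inside_sub[OF arcs(2,3) ends(3-6) int(3)] by auto
    then have "w \<in> ?I23" using w int by auto
    then show False using H w by auto
  qed
qed


lemma arc_reach:
  fixes q :: "real \<Rightarrow> complex"
  assumes "arc q" "pathstart q \<in> R" "open R" "open X" "R \<inter> X = {}"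
    "path_image q - {pathfinish q} \<subseteq> R \<union> X" "pathfinish q \<notin> R" "pathfinish q \<notin> frontier R"
  shows False
proof -
  let ?S = "q ` {0..<1}"
  have inj: "inj_on q {0..1}" using arc_imp_inj_on[OF assms(1)] .
  have S: "?S = path_image q - {pathfinish q}"
  proof
    show "?S \<subseteq> path_image q - {pathfinish q}"
      using inj by (auto simp: path_image_def pathfinish_def dest: inj_onD)
    show "path_image q - {pathfinish q} \<subseteq> ?S"
      by (auto simp: path_image_def pathfinish_def) (metis atLeastAtMost_iff atLeastLessThan_iff image_eqI less_eq_real_def)
  qed
  have cq: "continuous_on {0..1} q" using assms(1) arc_imp_path path_def by blast
  have conn: "connected ?S"
    by (rule connected_continuous_image) (auto intro: continuous_on_subset[OF cq])
  have "pathstart q \<in> ?S" by (auto simp: pathstart_def)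
  then have SR: "?S \<subseteq> R" using connected_sub_open[OF conn _ assms(3,4,5)] assms(2,6) S by auto
  have "q ` closure {0..<1} \<subseteq> closure ?S"
    by (rule image_closure_subset) (auto intro: continuous_on_subset[OF cq] closure_subset[THEN subsetD])
  then have "pathfinish q \<in> closure ?S" by (auto simp: pathfinish_def)
  then have "pathfinish q \<in> closure R" using closure_mono[OF SR] by blast
  then show False using assms(3,7,8) by (simp add: frontier_def interior_open)
qed

lemma theta_core:
  fixes p1 p2 p3 q1 q2 q3 :: "real \<Rightarrow> complex"
  assumes arcs: "arc p1" "arc p2" "arc p3"
    and ends: "pathstart p1 = a" "pathfinish p1 = b"
    "pathstart p2 = a" "pathfinish p2 = b" "pathstart p3 = a" "pathfinish p3 = b"
    and int: "path_image p1 \<inter> path_image p2 = {a,b}" "path_image p1 \<inter> path_image p3 = {a,b}"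
    "path_image p2 \<inter> path_image p3 = {a,b}"
    and ab: "a \<noteq> b"
    and ne: "path_image p3 \<inter> inside (path_image p1 \<union> path_image p2) \<noteq> {}"
    and c: "c \<notin> path_image p1 \<union> path_image p2 \<union> path_image p3"
    and qarc: "arc q1" "arc q2" "arc q3"
    and qs: "pathstart q1 = c" "pathstart q2 = c" "pathstart q3 = c"
    and m: "pathfinish q1 \<in> path_image p1 - {a,b}" "pathfinish q2 \<in> path_image p2 - {a,b}"
       "pathfinish q3 \<in> path_image p3 - {a,b}"
    and qi: "path_image q1 \<inter> (path_image p1 \<union> path_image p2 \<union> path_image p3) \<subseteq> {pathfinish q1}"
       "path_image q2 \<inter> (path_image p1 \<union> path_image p2 \<union> path_image p3) \<subseteq> {pathfinish q2}"
       "path_image q3 \<inter> (path_image p1 \<union> path_image p2 \<union> path_image p3) \<subseteq> {pathfinish q3}"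
  shows False
proof -
  let ?T = "path_image p1 \<union> path_image p2 \<union> path_image p3"
  let ?O = "outside (path_image p1 \<union> path_image p2)"
  let ?I12 = "inside (path_image p1 \<union> path_image p2)"
  let ?E = "inside (path_image p1 \<union> path_image p3)"
  let ?F = "inside (path_image p2 \<union> path_image p3)"
  have sp: "simple_path p1" "simple_path p2" "simple_path p3" using arcs arc_imp_simple_path by auto
  obtain EF: "?E \<inter> ?F = {}" and EFI: "?E \<union> ?F \<union> (path_image p3 - {a,b}) = ?I12"
    using split_inside_simple_closed_curve[OF sp(1) ends(1,2) sp(2) ends(3,4) sp(3) ends(5,6) ab int ne]
    by blast
  note J12 = jordan_facts[OF arcs(1,2) ends(1-4) int(1)]
  note J13 = jordan_facts[OF arcs(1,3) ends(1,2,5,6) int(2)]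
  note J23 = jordan_facts[OF arcs(2,3) ends(3-6) int(3)]
  have OE: "?O \<inter> ?E = {}" and OF: "?O \<inter> ?F = {}"
    using EFI inside_Int_outside[of "path_image p1 \<union> path_image p2"] by blast+
  have cover: "- ?T \<subseteq> ?O \<union> ?E \<union> ?F"
    using EFI inside_Un_outside[of "path_image p1 \<union> path_image p2"] by blast
  have I12T: "?I12 \<inter> (path_image p1 \<union> path_image p2) = {}" by simp
  have qsub: "path_image q - {pathfinish q} \<subseteq> - ?T"
    if "path_image q \<inter> ?T \<subseteq> {pathfinish q}" for q :: "real \<Rightarrow> complex"
    using that by blast
  have "c \<in> ?O \<or> c \<in> ?E \<or> c \<in> ?F" using c cover by blast
  then show False
  proof (elim disjE)
    assume cO: "c \<in> ?O"
    show False
    proof (rule arc_reach[OF qarc(3), of ?O "?E \<union> ?F"])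
      show "path_image q3 - {pathfinish q3} \<subseteq> ?O \<union> (?E \<union> ?F)"
        using qsub[OF qi(3)] cover by blast
      show "pathfinish q3 \<notin> ?O" using m(3) EFI inside_Int_outside[of "path_image p1 \<union> path_image p2"] by blast
      show "pathfinish q3 \<notin> frontier ?O" using J12(6) m(3) int by blast
    qed (use cO qs J12 J13 J23 OE OF in auto)
  next
    assume cE: "c \<in> ?E"
    show False
    proof (rule arc_reach[OF qarc(2), of ?E "?O \<union> ?F"])
      show "path_image q2 - {pathfinish q2} \<subseteq> ?E \<union> (?O \<union> ?F)"
        using qsub[OF qi(2)] cover by blast
      show "pathfinish q2 \<notin> ?E" using m(2) EFI I12T by blast
      show "pathfinish q2 \<notin> frontier ?E" using J13(5) m(2) int by blast
    qed (use cE qs J12 J13 J23 OE OF EF in auto)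
  next
    assume cF: "c \<in> ?F"
    show False
    proof (rule arc_reach[OF qarc(1), of ?F "?O \<union> ?E"])
      show "path_image q1 - {pathfinish q1} \<subseteq> ?F \<union> (?O \<union> ?E)"
        using qsub[OF qi(1)] cover by blast
      show "pathfinish q1 \<notin> ?F" using m(1) EFI I12T by blast
      show "pathfinish q1 \<notin> frontier ?F" using J23(5) m(1) int by blast
    qed (use cF qs J12 J13 J23 OE OF EF in auto)
  qed
qed


lemma theta_no_point:
  fixes p1 p2 p3 q1 q2 q3 :: "real \<Rightarrow> complex"
  assumes arcs: "arc p1" "arc p2" "arc p3"
    and ends: "pathstart p1 = a" "pathfinish p1 = b"
    "pathstart p2 = a" "pathfinish p2 = b" "pathstart p3 = a" "pathfinish p3 = b"
    and int: "path_image p1 \<inter> path_image p2 = {a,b}" "path_image p1 \<inter> path_image p3 = {a,b}"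
    "path_image p2 \<inter> path_image p3 = {a,b}"
    and ab: "a \<noteq> b"
    and c: "c \<notin> path_image p1 \<union> path_image p2 \<union> path_image p3"
    and qarc: "arc q1" "arc q2" "arc q3"
    and qs: "pathstart q1 = c" "pathstart q2 = c" "pathstart q3 = c"
    and m: "pathfinish q1 \<in> path_image p1 - {a,b}" "pathfinish q2 \<in> path_image p2 - {a,b}"
       "pathfinish q3 \<in> path_image p3 - {a,b}"
    and qi: "path_image q1 \<inter> (path_image p1 \<union> path_image p2 \<union> path_image p3) \<subseteq> {pathfinish q1}"
       "path_image q2 \<inter> (path_image p1 \<union> path_image p2 \<union> path_image p3) \<subseteq> {pathfinish q2}"
       "path_image q3 \<inter> (path_image p1 \<union> path_image p2 \<union> path_image p3) \<subseteq> {pathfinish q3}"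
  shows False
proof -
  have int': "path_image p2 \<inter> path_image p1 = {a,b}" "path_image p3 \<inter> path_image p1 = {a,b}"
    "path_image p3 \<inter> path_image p2 = {a,b}" using int by auto
  have U: "path_image p1 \<union> path_image p3 \<union> path_image p2 = path_image p1 \<union> path_image p2 \<union> path_image p3"
    "path_image p2 \<union> path_image p3 \<union> path_image p1 = path_image p1 \<union> path_image p2 \<union> path_image p3"
    by auto
  from theta_wlog[OF arcs ends int] show False
  proof (elim disjE)
    assume "path_image p3 \<inter> inside (path_image p1 \<union> path_image p2) \<noteq> {}"
    from theta_core[OF arcs ends int ab this c qarc qs m qi] show False .
  next
    assume "path_image p2 \<inter> inside (path_image p1 \<union> path_image p3) \<noteq> {}"
    from theta_core[OF arcs(1,3,2) ends(1,2,5,6,3,4) int(2,1) int'(3) ab this _ qarc(1,3,2) qs(1,3,2) m(1,3,2)]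
    show False using c qi unfolding U by blast
  next
    assume "path_image p1 \<inter> inside (path_image p2 \<union> path_image p3) \<noteq> {}"
    from theta_core[OF arcs(2,3,1) ends(3-6,1,2) int(3) int'(1,2) ab this _ qarc(2,3,1) qs(2,3,1) m(2,3,1)]
    show False using c qi unfolding U by blast
  qed
qed


lemma K33_complex:
  fixes A B :: "nat \<Rightarrow> complex" and g :: "nat \<Rightarrow> nat \<Rightarrow> real \<Rightarrow> complex"
  assumes arc: "\<And>i j. i < 3 \<Longrightarrow> j < 3 \<Longrightarrow> arc (g i j)"
    and st: "\<And>i j. i < 3 \<Longrightarrow> j < 3 \<Longrightarrow> pathstart (g i j) = A i"
    and fi: "\<And>i j. i < 3 \<Longrightarrow> j < 3 \<Longrightarrow> pathfinish (g i j) = B j"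
    and int: "\<And>i j i' j'. i < 3 \<Longrightarrow> j < 3 \<Longrightarrow> i' < 3 \<Longrightarrow> j' < 3 \<Longrightarrow> (i,j) \<noteq> (i',j') \<Longrightarrow>
       path_image (g i j) \<inter> path_image (g i' j') = (if i = i' then {A i} else {}) \<union> (if j = j' then {B j} else {})"
    and avA: "\<And>i j k. i < 3 \<Longrightarrow> j < 3 \<Longrightarrow> k < 3 \<Longrightarrow> k \<noteq> i \<Longrightarrow> A k \<notin> path_image (g i j)"
  shows False
proof -
  define p where "p j = g 0 j +++ reversepath (g 1 j)" for j
  have inA: "A i \<in> path_image (g i j)" "B j \<in> path_image (g i j)" if "i < 3" "j < 3" for i j
    using st[OF that] fi[OF that] pathstart_in_path_image[of "g i j"] pathfinish_in_path_image[of "g i j"] by auto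
  have A01: "A 0 \<noteq> A 1" using avA[of 1 0 0] inA[of 1 0] by auto
  have AB: "A i \<noteq> B j" if "i < 3" "j < 3" for i j
  proof -
    define k :: nat where "k = (if i = 0 then 1 else 0)"
    have "k < 3" "k \<noteq> i" by (auto simp: k_def)
    then show ?thesis using avA[of k j i] inA[of k j] that by auto
  qed
  have parc: "arc (p j)" if "j < 3" for j
    unfolding p_def
  proof (rule arc_join)
    show "arc (g 0 j)" "arc (reversepath (g 1 j))" using arc that by (auto simp: arc_reversepath)
    show "pathfinish (g 0 j) = pathstart (reversepath (g 1 j))" using fi that by simp
    show "path_image (g 0 j) \<inter> path_image (reversepath (g 1 j)) \<subseteq> {pathstart (reversepath (g 1 j))}"
      using int[of 0 j 1 j] fi[of 1 j] that by simp
  qed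
  have pst: "pathstart (p j) = A 0" "pathfinish (p j) = A 1" if "j < 3" for j
    using st fi that by (auto simp: p_def)
  have pim: "path_image (p j) = path_image (g 0 j) \<union> path_image (g 1 j)" if "j < 3" for j
    using fi that by (simp add: p_def path_image_join)
  have pint: "path_image (p j) \<inter> path_image (p k) = {A 0, A 1}" if "j < 3" "k < 3" "j \<noteq> k" for j k
  proof -
    have "path_image (g 0 j) \<inter> path_image (g 0 k) = {A 0}" "path_image (g 0 j) \<inter> path_image (g 1 k) = {}"
      "path_image (g 1 j) \<inter> path_image (g 0 k) = {}" "path_image (g 1 j) \<inter> path_image (g 1 k) = {A 1}"
      using int[of 0 j 0 k] int[of 0 j 1 k] int[of 1 j 0 k] int[of 1 j 1 k] that by auto
    then show ?thesis using pim that by auto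
  qed
  have c: "A 2 \<notin> path_image (p 0) \<union> path_image (p 1) \<union> path_image (p 2)"
      using pim avA[of 0 _ 2] avA[of 1 _ 2] by auto
  have m: "pathfinish (g 2 j) \<in> path_image (p j) - {A 0, A 1}" if "j < 3" for j
      using fi[of 2 j] pim[of j] inA[of 0 j] AB[of 0 j] AB[of 1 j] that by auto
  have qi: "path_image (g 2 j) \<inter> (path_image (p 0) \<union> path_image (p 1) \<union> path_image (p 2)) \<subseteq> {pathfinish (g 2 j)}"
      if "j < 3" for j
  proof -
      have h: "path_image (g 2 j) \<inter> path_image (g i k) \<subseteq> {B j}" if "i < 2" "k < 3" for i k
        using int[of 2 j i k] that \<open>j < 3\<close> by auto
      show ?thesis using pim[of 0] pim[of 1] pim[of 2] fi[of 2 j] that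
          h[of 0 0] h[of 0 1] h[of 0 2] h[of 1 0] h[of 1 1] h[of 1 2] by auto
  qed
  show False
  proof (rule theta_no_point[OF parc[of 0] parc[of 1] parc[of 2] pst(1,2)[of 0] pst(1,2)[of 1] pst(1,2)[of 2]
        pint[of 0 1] pint[of 0 2] pint[of 1 2] A01 c arc[of 2 0] arc[of 2 1] arc[of 2 2] st[of 2 0] st[of 2 1] st[of 2 2]
        m[of 0] m[of 1] m[of 2] qi[of 0] qi[of 1] qi[of 2]])
  qed auto
qed

definition cf :: "real \<times> real \<Rightarrow> complex" where "cf p = Complex (fst p) (snd p)"

lemma linear_cf: "linear cf"
  by (rule linearI) (auto simp: cf_def complex_eq_iff scaleR_prod_def)

lemma inj_cf: "inj cf"
  by (rule injI) (auto simp: cf_def complex_eq_iff prod_eq_iff)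

lemma planar_no_K33:
  fixes V :: "'v set" and H :: "'v set set" and a b :: "nat \<Rightarrow> 'v"
  assumes pl: "planar V H"
    and ainj: "inj_on a {..<3}" and binj: "inj_on b {..<3}" and ab: "\<And>i j. i < 3 \<Longrightarrow> j < 3 \<Longrightarrow> a i \<noteq> b j"
    and inV: "\<And>i. i < 3 \<Longrightarrow> a i \<in> V" "\<And>j. j < 3 \<Longrightarrow> b j \<in> V"
    and edges: "\<And>i j. i < 3 \<Longrightarrow> j < 3 \<Longrightarrow> {a i, b j} \<in> H"
  shows False
proof -
  obtain pos :: "'v \<Rightarrow> real \<times> real" and \<gamma> :: "'v set \<Rightarrow> real \<Rightarrow> real \<times> real" where
    P: "inj_on pos V \<and>
     (\<forall>e\<in>H. arc (\<gamma> e) \<and> {pathstart (\<gamma> e), pathfinish (\<gamma> e)} = pos ` e \<and>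
              path_image (\<gamma> e) \<inter> pos ` V = pos ` e) \<and>
     (\<forall>e\<in>H. \<forall>e'\<in>H. e \<noteq> e' \<longrightarrow> path_image (\<gamma> e) \<inter> path_image (\<gamma> e') = pos ` (e \<inter> e'))"
    using pl unfolding planar_def by (elim exE) (rule that)
  have pinj: "inj_on pos V" using P by blast
  have garc: "\<And>e. e \<in> H \<Longrightarrow> arc (\<gamma> e) \<and> {pathstart (\<gamma> e), pathfinish (\<gamma> e)} = pos ` e \<and>
              path_image (\<gamma> e) \<inter> pos ` V = pos ` e" using P by blast
  have gint: "\<And>e e'. e \<in> H \<Longrightarrow> e' \<in> H \<Longrightarrow> e \<noteq> e' \<Longrightarrow> path_image (\<gamma> e) \<inter> path_image (\<gamma> e') = pos ` (e \<inter> e')"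
    using P by blast
  define A where "A i = cf (pos (a i))" for i
  define B where "B j = cf (pos (b j))" for j
  define h where "h i j = cf \<circ> \<gamma> {a i, b j}" for i j
  define g where "g i j = (if pathstart (h i j) = A i then h i j else reversepath (h i j))" for i j
  have harc: "arc (h i j)" if "i < 3" "j < 3" for i j
    using garc[OF edges[OF that]] arc_linear_image_eq[OF linear_cf inj_cf] by (simp add: h_def)
  have hends: "{pathstart (h i j), pathfinish (h i j)} = {A i, B j}" if "i < 3" "j < 3" for i j
  proof -
    have "{pathstart (\<gamma> {a i, b j}), pathfinish (\<gamma> {a i, b j})} = {pos (a i), pos (b j)}"
      using garc[OF edges[OF that]] by simp
    then have "cf ` {pathstart (\<gamma> {a i, b j}), pathfinish (\<gamma> {a i, b j})} = cf ` {pos (a i), pos (b j)}"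
      by (rule arg_cong)
    then show ?thesis by (simp add: h_def A_def B_def pathstart_compose pathfinish_compose)
  qed
  have gprops: "arc (g i j) \<and> pathstart (g i j) = A i \<and> pathfinish (g i j) = B j \<and> path_image (g i j) = cf ` path_image (\<gamma> {a i, b j})"
    if "i < 3" "j < 3" for i j
  proof -
    have ne: "pathstart (h i j) \<noteq> pathfinish (h i j)" using harc[OF that] by (auto simp: arc_simple_path)
    show ?thesis
      using hends[OF that] ne harc[OF that]
      by (auto simp: g_def arc_reversepath doubleton_eq_iff h_def path_image_compose)
  qed
  have pV: "pos (a i) \<in> pos ` V" if "i < 3" for i using inV that by auto
  show False
  proof (rule K33_complex[of g A B])
    show "arc (g i j)" "pathstart (g i j) = A i" "pathfinish (g i j) = B j" if "i < 3" "j < 3" for i j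
      using gprops[OF that] by auto
    show "path_image (g i j) \<inter> path_image (g i' j') = (if i = i' then {A i} else {}) \<union> (if j = j' then {B j} else {})"
      if "i < 3" "j < 3" "i' < 3" "j' < 3" "(i,j) \<noteq> (i',j')" for i j i' j'
    proof -
      have ne: "{a i, b j} \<noteq> {a i', b j'}"
        using that ab ainj binj by (auto simp: doubleton_eq_iff inj_on_def)
      have "{a i, b j} \<inter> {a i', b j'} = (if i = i' then {a i} else {}) \<union> (if j = j' then {b j} else {})"
        using that ab ainj binj by (auto simp: inj_on_def)
      moreover have "cf ` X \<inter> cf ` Y = cf ` (X \<inter> Y)" for X Y
        using inj_cf by (simp add: image_Int)
      ultimately show ?thesis
        using gint[OF edges[OF that(1,2)] edges[OF that(3,4)] ne] gprops[OF that(1,2)] gprops[OF that(3,4)]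
        by (auto simp: A_def B_def)
    qed
    show "A k \<notin> path_image (g i j)" if "i < 3" "j < 3" "k < 3" "k \<noteq> i" for i j k
    proof
      assume "A k \<in> path_image (g i j)"
      then have "pos (a k) \<in> path_image (\<gamma> {a i, b j})"
        using gprops[OF that(1,2)] inj_image_mem_iff[OF inj_cf] by (simp add: A_def)
      then have "pos (a k) \<in> pos ` {a i, b j}" using garc[OF edges[OF that(1,2)]] pV[OF that(3)] by blast
      then have "a k = a i \<or> a k = b j"
        using pinj inV that by (auto simp: inj_on_def)
      then show False using that ainj ab by (auto simp: inj_on_def)
    qed
  qed
qed

lemma hall_marriage:
  fixes N :: "'a \<Rightarrow> 'b set"
  assumes "finite L" "\<forall>l\<in>L. finite (N l)" "\<forall>S\<subseteq>L. card S \<le> card (\<Union>(N ` S))"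
  shows "\<exists>f. inj_on f L \<and> (\<forall>l\<in>L. f l \<in> N l)"
  using assms
proof (induction "card L" arbitrary: L N rule: less_induct)
  case less
  note fin = less.prems(1) and finN = less.prems(2) and hall = less.prems(3)
  show ?case
  proof (cases "L = {}")
    case True then show ?thesis by auto
  next
    case Lne: False
    show ?thesis
    proof (cases "\<forall>S. S \<subseteq> L \<and> S \<noteq> {} \<and> S \<noteq> L \<longrightarrow> card S < card (\<Union>(N ` S))")
      case True
      obtain l where l: "l \<in> L" using Lne by blast
      have "card {l} \<le> card (\<Union>(N ` {l}))" using hall l by (meson empty_subsetI insert_subset)
      then have "N l \<noteq> {}" by auto
      then obtain r where r: "r \<in> N l" by blast
      define L' where "L' = L - {l}"
      define N' where "N' x = N x - {r}" for x
      have "card L' < card L" using l fin unfolding L'_def by (metis card_Diff1_less)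
      moreover have "finite L'" using fin by (simp add: L'_def)
      moreover have "\<forall>l\<in>L'. finite (N' l)" using finN by (simp add: N'_def L'_def)
      moreover have "\<forall>S\<subseteq>L'. card S \<le> card (\<Union>(N' ` S))"
      proof (intro allI impI)
        fix S assume S: "S \<subseteq> L'"
        show "card S \<le> card (\<Union>(N' ` S))"
        proof (cases "S = {}")
          case True then show ?thesis by simp
        next
          case False
          have SL: "S \<subseteq> L" "S \<noteq> L" using S l by (auto simp: L'_def)
          then have lt: "card S < card (\<Union>(N ` S))" using True False by blast
          have finU: "finite (\<Union>(N ` S))" using finN SL fin by (meson UN_iff finite_UN_I finite_subset subsetD)
          have "\<Union>(N' ` S) = \<Union>(N ` S) - {r}" by (auto simp: N'_def)
          then have "card (\<Union>(N' ` S)) \<ge> card (\<Union>(N ` S)) - 1"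
            using finU by (simp add: card_Diff_singleton_if)
          then show ?thesis using lt by linarith
        qed
      qed
      ultimately obtain f' where f': "inj_on f' L'" "\<forall>x\<in>L'. f' x \<in> N' x"
        using less.hyps[of L' N'] by blast
      define f where "f = f'(l := r)"
      have "inj_on f L"
      proof -
        have "inj_on f L'" using f'(1) by (simp add: f_def L'_def inj_on_def)
        moreover have "f l \<notin> f ` L'" using f'(2) by (auto simp: f_def N'_def L'_def)
        moreover have "L = insert l L'" using l by (auto simp: L'_def)
        moreover have "L' - {l} = L'" by (auto simp: L'_def)
        ultimately show ?thesis by (simp add: inj_on_insert)
      qed
      moreover have "\<forall>x\<in>L. f x \<in> N x" using f'(2) r by (auto simp: f_def N'_def L'_def)
      ultimately show ?thesis by blast
    next
      case False
      then obtain S0 where S0': "S0 \<subseteq> L \<and> S0 \<noteq> {} \<and> S0 \<noteq> L" "\<not> card S0 < card (\<Union>(N ` S0))" by blast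
      then have S0: "S0 \<subseteq> L" "S0 \<noteq> {}" "S0 \<noteq> L" "card (\<Union>(N ` S0)) \<le> card S0" by auto
      have finS0: "finite S0" using S0 fin finite_subset by blast
      have finU0: "finite (\<Union>(N ` S0))" using finN S0 finS0 by blast
      have eq0: "card (\<Union>(N ` S0)) = card S0" using S0 hall by (simp add: le_antisym)
      have lt1: "card S0 < card L" using S0 fin by (simp add: psubset_card_mono psubsetI)
      obtain f1 where f1: "inj_on f1 S0" "\<forall>x\<in>S0. f1 x \<in> N x"
      proof -
        have "\<forall>l\<in>S0. finite (N l)" using finN S0 by blast
        moreover have "\<forall>S\<subseteq>S0. card S \<le> card (\<Union>(N ` S))" using hall S0 by blast
        ultimately show ?thesis using less.hyps[OF lt1 finS0, of N] that by blast
      qed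
      define L2 where "L2 = L - S0"
      define N2 where "N2 x = N x - \<Union>(N ` S0)" for x
      have lt2: "card L2 < card L" unfolding L2_def
        by (rule psubset_card_mono) (use S0 fin in auto)
      have finL2: "finite L2" using fin by (simp add: L2_def)
      have hall2: "\<forall>S\<subseteq>L2. card S \<le> card (\<Union>(N2 ` S))"
      proof (intro allI impI)
        fix S assume S: "S \<subseteq> L2"
        have finS: "finite S" using S finL2 finite_subset by blast
        have finU: "finite (\<Union>(N ` (S \<union> S0)))" using finN S S0 finS finS0 by (auto simp: L2_def)
        have U: "\<Union>(N2 ` S) = \<Union>(N ` (S \<union> S0)) - \<Union>(N ` S0)" by (auto simp: N2_def)
        have "card (\<Union>(N2 ` S)) = card (\<Union>(N ` (S \<union> S0))) - card (\<Union>(N ` S0))"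
          unfolding U by (rule card_Diff_subset) (use finU finU0 in auto)
        moreover have "card (S \<union> S0) \<le> card (\<Union>(N ` (S \<union> S0)))" proof - have "S \<union> S0 \<subseteq> L" using S S0 by (auto simp: L2_def) then show ?thesis using hall by blast qed
        moreover have "card (S \<union> S0) = card S + card S0"
          using S finS finS0 by (subst card_Un_disjoint) (auto simp: L2_def)
        ultimately show "card S \<le> card (\<Union>(N2 ` S))" using eq0 by linarith
      qed
      obtain f2 where f2: "inj_on f2 L2" "\<forall>x\<in>L2. f2 x \<in> N2 x"
      proof -
        have "\<forall>l\<in>L2. finite (N2 l)" using finN by (auto simp: N2_def L2_def)
        then show ?thesis using less.hyps[OF lt2 finL2, of N2] hall2 that by blast
      qed
      define f where "f x = (if x \<in> S0 then f1 x else f2 x)" for x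
      have "\<forall>x\<in>L. f x \<in> N x" using f1(2) f2(2) by (auto simp: f_def L2_def N2_def)
      moreover have "inj_on f L"
      proof (rule inj_onI)
        fix x y assume xy: "x \<in> L" "y \<in> L" "f x = f y"
        show "x = y"
        proof (cases "x \<in> S0"; cases "y \<in> S0")
          assume "x \<in> S0" "y \<in> S0" then show ?thesis using xy f1(1) by (auto simp: f_def inj_on_def)
        next
          assume "x \<notin> S0" "y \<notin> S0" then show ?thesis using xy f2(1) by (auto simp: f_def inj_on_def L2_def)
        next
          assume a: "x \<in> S0" "y \<notin> S0"
          then have "f x \<in> \<Union>(N ` S0)" "f y \<notin> \<Union>(N ` S0)" using f1(2) f2(2) xy by (auto simp: f_def L2_def N2_def)
          then show ?thesis using xy by simp
        next
          assume a: "x \<notin> S0" "y \<in> S0"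
          have "f y \<in> \<Union>(N ` S0)" using a f1(2) by (auto simp: f_def)
          moreover have "f x \<notin> \<Union>(N ` S0)" using a f2(2) xy(1) unfolding f_def L2_def N2_def by simp
          ultimately show ?thesis using xy by simp
        qed
      qed
      ultimately show ?thesis by blast
    qed
  qed
qed

locale cliq =
  fixes clq :: "'a::finite set \<Rightarrow> bool"
  assumes down: "\<And>A B. clq B \<Longrightarrow> A \<subseteq> B \<Longrightarrow> clq A"
    and apex: "\<And>T. clq T \<Longrightarrow> card T = 3 \<Longrightarrow> card {x. x \<notin> T \<and> clq (insert x T)} \<le> 2"
begin

definition apexes :: "'a set \<Rightarrow> 'a set" where
  "apexes T = {x. x \<notin> T \<and> clq (insert x T)}"

lemma apex_sub: "clq T \<Longrightarrow> card T = 3 \<Longrightarrow> S \<subseteq> apexes T \<Longrightarrow> card S \<le> 2"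
  using apex[of T] card_mono[of "apexes T" S] by (simp add: apexes_def)

lemma diff_apexes: "clq F \<Longrightarrow> T \<subseteq> F \<Longrightarrow> F - T \<subseteq> apexes T"
  unfolding apexes_def using down by auto

lemma card_le5: assumes "clq B" shows "card B \<le> 5"
proof (rule ccontr)
  assume "\<not> card B \<le> 5"
  then have "3 \<le> card B" by linarith
  then obtain T where T: "T \<subseteq> B" "card T = 3" by (meson obtain_subset_with_card_n)
  have "card (B - T) = card B - 3" using T by (simp add: card_Diff_subset)
  then have "card (B - T) > 2" using \<open>\<not> card B \<le> 5\<close> by linarith
  moreover have "card (B - T) \<le> 2"
    using apex_sub[OF down[OF assms T(1)] T(2) diff_apexes[OF assms T(1)]] .
  ultimately show False by linarith
qed

lemma K4_in_K5:
  assumes F: "clq F" "card F = 5" and T: "T \<subseteq> F" "card T = 3" and Q: "clq Q" "T \<subseteq> Q"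
  shows "Q \<subseteq> F"
proof (rule ccontr)
  assume "\<not> Q \<subseteq> F"
  then obtain y where y: "y \<in> Q" "y \<notin> F" by blast
  have "insert y (F - T) \<subseteq> apexes T"
    using diff_apexes[OF F(1) T(1)] diff_apexes[OF Q(1) Q(2)] y T(1) by auto
  then have "card (insert y (F - T)) \<le> 2" using apex_sub[OF down[OF F(1) T(1)] T(2)] by blast
  moreover have "card (insert y (F - T)) = 3" using y F T by (simp add: card_Diff_subset)
  ultimately show False by simp
qed

lemma K5_unique:
  assumes F: "clq F" "card F = 5" and F': "clq F'" "card F' = 5" and T: "T \<subseteq> F" "T \<subseteq> F'" "card T = 3"
  shows "F = F'"
proof -
  have "F' \<subseteq> F" using K4_in_K5[OF F T(1,3) F'(1) T(2)] .
  then show ?thesis using F F' card_subset_eq[OF finite, of F' F] by simp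
qed


definition "K5 F \<longleftrightarrow> clq F \<and> card F = 5"
definition "tF F = (SOME T. T \<subseteq> F \<and> card T = 3)"
definition "inK5 B \<longleftrightarrow> (\<exists>F. K5 F \<and> tF F \<subseteq> B \<and> B \<subseteq> F)"
definition "FB B = (SOME F. K5 F \<and> tF F \<subseteq> B \<and> B \<subseteq> F)"
definition "LL = {Q. clq Q \<and> card Q = 4 \<and> \<not> inK5 Q}"
definition "RR = {T. clq T \<and> card T = 3 \<and> (\<forall>F. K5 F \<longrightarrow> T \<noteq> tF F)}"
definition "NN Q = {T. T \<subseteq> Q \<and> card T = 3}"

lemma tF_spec: "K5 F \<Longrightarrow> tF F \<subseteq> F \<and> card (tF F) = 3"
proof -
  assume "K5 F"
  then have "3 \<le> card F" by (simp add: K5_def)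
  then obtain T where "T \<subseteq> F" "card T = 3" by (meson obtain_subset_with_card_n)
  then show ?thesis unfolding tF_def by (rule someI[where P="\<lambda>T. T \<subseteq> F \<and> card T = 3", OF conjI])
qed

lemma FB_spec: "inK5 B \<Longrightarrow> K5 (FB B) \<and> tF (FB B) \<subseteq> B \<and> B \<subseteq> FB B"
  unfolding inK5_def FB_def by (rule someI_ex)

lemma FB_unique: assumes "K5 F" "tF F \<subseteq> B" "B \<subseteq> F" shows "FB B = F"
proof -
  have iB: "inK5 B" using assms by (auto simp: inK5_def)
  note G = FB_spec[OF iB]
  show ?thesis
    using K5_unique[of "FB B" F "tF (FB B)"] G tF_spec[of "FB B"] assms by (auto simp: K5_def)
qed

lemma NN_RR: assumes "Q \<in> LL" shows "NN Q \<subseteq> RR"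
proof
  fix T assume T: "T \<in> NN Q"
  have Q: "clq Q" "card Q = 4" "\<not> inK5 Q" using assms by (auto simp: LL_def)
  have "clq T" "card T = 3" using T down[OF Q(1)] by (auto simp: NN_def)
  moreover have "T \<noteq> tF F" if F: "K5 F" for F
  proof
    assume Tt: "T = tF F"
    have "Q \<subseteq> F" using K4_in_K5[of F T Q] F tF_spec[OF F] Tt Q T by (auto simp: K5_def NN_def)
    then show False using Q(3) F Tt T by (auto simp: inK5_def NN_def)
  qed
  ultimately show "T \<in> RR" by (auto simp: RR_def)
qed

lemma RR_not_inK5: assumes "T \<in> RR" shows "\<not> inK5 T"
proof
  assume "inK5 T"
  then obtain F where F: "K5 F" "tF F \<subseteq> T" "T \<subseteq> F" by (auto simp: inK5_def)
  have "tF F = T" using card_subset_eq[OF finite F(2)] tF_spec[OF F(1)] assms by (auto simp: RR_def)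
  then show False using assms F(1) by (auto simp: RR_def)
qed

lemma card_NN: assumes "card (Q::'a set) = 4" shows "card (NN Q) = 4"
proof -
  have "(4::nat) choose 3 = 4" by (simp add: numeral_eq_Suc)
  then show ?thesis using n_subsets[OF finite, of Q 3] assms by (simp add: NN_def)
qed

lemma deg_right: assumes "T \<in> RR" shows "card {Q \<in> LL. T \<in> NN Q} \<le> 2"
proof -
  have T: "clq T" "card T = 3" using assms by (auto simp: RR_def)
  have "{Q \<in> LL. T \<in> NN Q} \<subseteq> (\<lambda>x. insert x T) ` apexes T"
  proof
    fix Q assume "Q \<in> {Q \<in> LL. T \<in> NN Q}"
    then have Q: "clq Q" "card Q = 4" "T \<subseteq> Q" by (auto simp: LL_def NN_def)
    have "card (Q - T) = 1" using Q T by (simp add: card_Diff_subset)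
    then obtain x where x: "Q - T = {x}" by (auto simp: card_Suc_eq)
    then have QT: "Q = insert x T" using Q by auto
    then have "x \<in> apexes T" using Q x by (auto simp: apexes_def)
    then show "Q \<in> (\<lambda>x. insert x T) ` apexes T" using QT by blast
  qed
  then have "card {Q \<in> LL. T \<in> NN Q} \<le> card (apexes T)"
    by (meson card_image_le card_mono finite order_trans)
  also have "\<dots> \<le> 2" using apex_sub[OF T] by blast
  finally show ?thesis .
qed

lemma matching: "\<exists>\<mu>. inj_on \<mu> LL \<and> (\<forall>Q\<in>LL. \<mu> Q \<in> NN Q)"
proof (rule hall_marriage)
  show "finite LL" by simp
  show "\<forall>l\<in>LL. finite (NN l)" by simp
  show "\<forall>S\<subseteq>LL. card S \<le> card (\<Union>(NN ` S))"
  proof (intro allI impI)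
    fix S assume S: "S \<subseteq> LL"
    let ?U = "\<Union>(NN ` S)"
    have "4 * card S = (\<Sum>Q\<in>S. (4::nat))" by simp
    also have "\<dots> = (\<Sum>Q\<in>S. card (NN Q))"
      using S card_NN by (intro sum.cong) (auto simp: LL_def)
    also have "\<dots> = (\<Sum>Q\<in>S. \<Sum>T\<in>?U. of_bool (T \<in> NN Q))"
    proof (rule sum.cong[OF refl])
      fix Q assume "Q \<in> S"
      then have "?U \<inter> {T. T \<in> NN Q} = NN Q" by auto
      then show "card (NN Q) = (\<Sum>T\<in>?U. of_bool (T \<in> NN Q))" by simp
    qed
    also have "\<dots> = (\<Sum>T\<in>?U. \<Sum>Q\<in>S. of_bool (T \<in> NN Q))" by (rule sum.swap)
    also have "\<dots> = (\<Sum>T\<in>?U. card (S \<inter> {Q. T \<in> NN Q}))" by simp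
    also have "\<dots> \<le> (\<Sum>T\<in>?U. 2)"
    proof (rule sum_mono)
      fix T assume T: "T \<in> ?U"
      then have "T \<in> RR" using NN_RR S by blast
      then have "card {Q \<in> LL. T \<in> NN Q} \<le> 2" by (rule deg_right)
      moreover have "S \<inter> {Q. T \<in> NN Q} \<subseteq> {Q \<in> LL. T \<in> NN Q}" using S by auto
      ultimately show "card (S \<inter> {Q. T \<in> NN Q}) \<le> 2" by (meson card_mono finite order_trans)
    qed
    also have "\<dots> = 2 * card ?U" by simp
    finally show "card S \<le> card ?U" by linarith
  qed
qed


lemma two_step: fixes A B' Q :: "'a set" assumes "A \<subseteq> B'" "B' \<subseteq> Q" "card A = 3" "card Q = 4"
  shows "B' = A \<or> B' = Q"
proof (cases "B' = Q")
  case False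
  then have "card B' < 4" using assms psubset_card_mono[OF finite, of B' Q] by auto
  moreover have "card A \<le> card B'" using assms card_mono[OF finite] by blast
  ultimately have "card A = card B'" using assms by linarith
  then show ?thesis using card_subset_eq[OF finite assms(1)] by simp
qed simp

theorem partition_exists:
  "\<exists>\<phi>. \<forall>B. clq B \<longrightarrow> fst (\<phi> B) \<subseteq> B \<and> B \<subseteq> snd (\<phi> B) \<and> clq (snd (\<phi> B)) \<and> card (fst (\<phi> B)) \<le> 3 \<and>
        (\<forall>B'. fst (\<phi> B) \<subseteq> B' \<and> B' \<subseteq> snd (\<phi> B) \<longrightarrow> \<phi> B' = \<phi> B)"
proof -
  obtain \<mu> where mu: "inj_on \<mu> LL" "\<forall>Q\<in>LL. \<mu> Q \<in> NN Q" using matching by blast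
  define QB where "QB B = (SOME Q. Q \<in> LL \<and> \<mu> Q = B)" for B
  have QB: "QB (\<mu> Q) = Q" if "Q \<in> LL" for Q
  proof -
    have "QB (\<mu> Q) \<in> LL \<and> \<mu> (QB (\<mu> Q)) = \<mu> Q"
      unfolding QB_def by (rule someI[of _ Q]) (use that in auto)
    then show ?thesis using mu(1) that by (auto dest: inj_onD)
  qed
  have muR: "\<mu> Q \<in> RR" "\<mu> Q \<subseteq> Q" "card (\<mu> Q) = 3" if "Q \<in> LL" for Q
    using mu(2) NN_RR[OF that] that by (auto simp: NN_def)
  define \<phi> where "\<phi> B = (if inK5 B then (tF (FB B), FB B)
      else if B \<in> LL then (\<mu> B, B)
      else if B \<in> \<mu> ` LL then (B, QB B) else (B, B))" for B
  have main: "fst (\<phi> B) \<subseteq> B \<and> B \<subseteq> snd (\<phi> B) \<and> clq (snd (\<phi> B)) \<and> card (fst (\<phi> B)) \<le> 3 \<and>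
        (\<forall>B'. fst (\<phi> B) \<subseteq> B' \<and> B' \<subseteq> snd (\<phi> B) \<longrightarrow> \<phi> B' = \<phi> B)" if B: "clq B" for B
  proof (cases "inK5 B")
    case True
    note F = FB_spec[OF True]
    let ?F = "FB B"
    have cl: "\<phi> B' = \<phi> B" if "tF ?F \<subseteq> B'" "B' \<subseteq> ?F" for B'
    proof -
      have "FB B' = ?F" using FB_unique[OF F[THEN conjunct1] that] .
      moreover have "inK5 B'" using that F by (auto simp: inK5_def)
      ultimately show ?thesis using True by (simp add: \<phi>_def)
    qed
    show ?thesis using True F tF_spec[of ?F] cl by (auto simp: \<phi>_def K5_def)
  next
    case nK: False
    show ?thesis
    proof (cases "B \<in> LL")
      case True
      have cl: "\<phi> B' = \<phi> B" if "\<mu> B \<subseteq> B'" "B' \<subseteq> B" for B'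
      proof -
        have "B' = \<mu> B \<or> B' = B" using two_step[OF that] muR[OF True] True by (auto simp: LL_def)
        then show ?thesis
        proof
          assume B': "B' = \<mu> B"
          have "\<not> inK5 B'" using RR_not_inK5 muR[OF True] B' by blast
          moreover have "B' \<notin> LL" using muR[OF True] B' by (auto simp: LL_def)
          ultimately show ?thesis using B' True nK QB[OF True] by (auto simp: \<phi>_def)
        qed simp
      qed
      show ?thesis using nK True muR[OF True] cl by (auto simp: \<phi>_def LL_def)
    next
      case nL: False
      show ?thesis
      proof (cases "B \<in> \<mu> ` LL")
        case True
        then obtain Q where Q: "Q \<in> LL" "B = \<mu> Q" by blast
        have QBB: "QB B = Q" using QB[OF Q(1)] Q by simp
        have cl: "\<phi> B' = \<phi> B" if "B \<subseteq> B'" "B' \<subseteq> Q" for B'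
        proof -
          have "B' = B \<or> B' = Q" using two_step[OF that] muR[OF Q(1)] Q by (auto simp: LL_def)
          then show ?thesis
          proof
            assume B': "B' = Q"
            have "\<not> inK5 Q" using Q by (auto simp: LL_def)
            then show ?thesis using B' Q nK nL True QBB by (auto simp: \<phi>_def)
          qed simp
        qed
        show ?thesis using nK nL True QBB Q muR[OF Q(1)] cl by (auto simp: \<phi>_def LL_def)
      next
        case nM: False
        have "card B \<le> 3"
        proof (rule ccontr)
          assume "\<not> card B \<le> 3"
          moreover have "card B \<le> 5" using card_le5[OF B] .
          ultimately consider "card B = 4" | "card B = 5" by linarith
          then show False
          proof cases
            case 1 then show False using nL nK B by (auto simp: LL_def)
          next
            case 2
            then have "K5 B" using B by (simp add: K5_def)
            then have "inK5 B" using tF_spec[of B] by (auto simp: inK5_def)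
            then show False using nK by simp
          qed
        qed
        then show ?thesis using nK nL nM B by (auto simp: \<phi>_def)
      qed
    qed
  qed
  show ?thesis using main by blast
qed

end

definition monom :: "'v set \<Rightarrow> ('v \<Rightarrow>\<^sub>0 nat)" where
  "monom U = (\<Sum>v\<in>U. Poly_Mapping.single v 1)"

lemma lookup_monom: "finite U \<Longrightarrow> Poly_Mapping.lookup (monom U) v = (if v \<in> U then 1 else 0)"
  by (simp add: monom_def lookup_sum lookup_single when_def)

lemma keys_monom: "finite U \<Longrightarrow> Poly_Mapping.keys (monom U) = U"
  by (auto simp: in_keys_iff lookup_monom split: if_splits)

lemma keys_add_nat: "Poly_Mapping.keys (m + n :: 'v \<Rightarrow>\<^sub>0 nat) = Poly_Mapping.keys m \<union> Poly_Mapping.keys n"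
  by (auto simp: in_keys_iff lookup_add)

lemma sqfree_mon_eq: "finite U \<Longrightarrow> (sqfree_mon U :: ('v, 'k::comm_ring_1) mpoly) = Poly_Mapping.single (monom U) 1"
proof (induction U rule: finite_induct)
  case empty
  then show ?case by (simp add: sqfree_mon_def monom_def)
next
  case (insert x F)
  then show ?case
    by (simp add: sqfree_mon_def monom_def var_def mult_single)
qed

lemma monom_le: assumes "finite U" "U \<subseteq> Poly_Mapping.keys m"
  shows "monom U + (m - monom U) = m"
proof (rule poly_mapping_eqI)
  fix v
  show "Poly_Mapping.lookup (monom U + (m - monom U)) v = Poly_Mapping.lookup m v"
    using assms by (auto simp: lookup_add lookup_minus lookup_monom in_keys_iff)
qed

lemma keys_minus_monom: "Poly_Mapping.keys (m - monom U) \<subseteq> Poly_Mapping.keys (m :: 'v \<Rightarrow>\<^sub>0 nat)"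
  by (auto simp: in_keys_iff lookup_minus)

lemma poly_repr: "f = (\<Sum>m\<in>Poly_Mapping.keys f. Poly_Mapping.single m (Poly_Mapping.lookup f m))"
proof (rule poly_mapping_eqI)
  fix n
  have "(\<Sum>m\<in>Poly_Mapping.keys f. (Poly_Mapping.lookup f m when m = n)) = Poly_Mapping.lookup f n"
    by (simp add: when_def in_keys_iff)
  then show "Poly_Mapping.lookup f n = Poly_Mapping.lookup (\<Sum>m\<in>Poly_Mapping.keys f. Poly_Mapping.single m (Poly_Mapping.lookup f m)) n"
    by (simp add: lookup_sum lookup_single)
qed

lemma mult_single_repr:
  "Poly_Mapping.single k (1::'k::comm_ring_1) * h = (\<Sum>m\<in>Poly_Mapping.keys h. Poly_Mapping.single (k + m) (Poly_Mapping.lookup h m))"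
proof -
  have "Poly_Mapping.single k (1::'k) * h = Poly_Mapping.single k 1 * (\<Sum>m\<in>Poly_Mapping.keys h. Poly_Mapping.single m (Poly_Mapping.lookup h m))"
    by (subst poly_repr[of h]) simp
  also have "\<dots> = (\<Sum>m\<in>Poly_Mapping.keys h. Poly_Mapping.single (k + m) (Poly_Mapping.lookup h m))"
    by (simp add: sum_distrib_left mult_single)
  finally show ?thesis .
qed

lemma lookup_mult_single:
  fixes h :: "('v \<Rightarrow>\<^sub>0 nat) \<Rightarrow>\<^sub>0 'k::comm_ring_1"
  shows "Poly_Mapping.lookup (Poly_Mapping.single k 1 * h) (k + m0) = Poly_Mapping.lookup h m0"
proof -
  have "Poly_Mapping.lookup (Poly_Mapping.single k 1 * h) (k + m0) =
      (\<Sum>m\<in>Poly_Mapping.keys h. (Poly_Mapping.lookup h m when k + m = k + m0))"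
    by (simp add: mult_single_repr lookup_sum lookup_single)
  also have "\<dots> = (\<Sum>m\<in>Poly_Mapping.keys h. (if m = m0 then Poly_Mapping.lookup h m else 0))"
    by (simp add: when_def)
  also have "\<dots> = Poly_Mapping.lookup h m0"
    by (simp add: in_keys_iff)
  finally show ?thesis .
qed

lemma keys_mult_single:
  fixes h :: "('v \<Rightarrow>\<^sub>0 nat) \<Rightarrow>\<^sub>0 'k::comm_ring_1"
  shows "Poly_Mapping.keys (Poly_Mapping.single k 1 * h) = (\<lambda>m. k + m) ` Poly_Mapping.keys h"
proof
  show "Poly_Mapping.keys (Poly_Mapping.single k 1 * h) \<subseteq> (\<lambda>m. k + m) ` Poly_Mapping.keys h"
    using keys_mult[of "Poly_Mapping.single k (1::'k)" h] by auto
  show "(\<lambda>m. k + m) ` Poly_Mapping.keys h \<subseteq> Poly_Mapping.keys (Poly_Mapping.single k 1 * h)"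
    by (auto simp: in_keys_iff lookup_mult_single)
qed


definition face :: "'v set set \<Rightarrow> 'v set \<Rightarrow> bool" where
  "face E S \<longleftrightarrow> (\<forall>e\<in>E. \<not> e \<subseteq> S)"

lemma ideal_imp:
  assumes fin: "\<forall>e\<in>E. finite e"
    and p: "(p :: ('v, 'k::comm_ring_1) mpoly) \<in> edge_ideal E" and m: "m \<in> Poly_Mapping.keys p"
  shows "\<not> face E (Poly_Mapping.keys m)"
proof -
  obtain q where q: "p = (\<Sum>e\<in>E. q e * sqfree_mon e)" using p by (auto simp: edge_ideal_def)
  then obtain e where e: "e \<in> E" "m \<in> Poly_Mapping.keys (q e * sqfree_mon e)"
    using keys_sum[of "\<lambda>e. q e * sqfree_mon e" E] m by blast
  then have "m \<in> Poly_Mapping.keys (Poly_Mapping.single (monom e) 1 * q e)"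
    using fin by (simp add: sqfree_mon_eq mult.commute)
  then obtain m' where "m = monom e + m'" by (auto simp: keys_mult_single)
  then have "e \<subseteq> Poly_Mapping.keys m" using fin e by (simp add: keys_add_nat keys_monom)
  then show ?thesis using e by (auto simp: face_def)
qed

lemma ideal_intro:
  assumes finE: "finite E" and fin: "\<forall>e\<in>E. finite e"
    and H: "\<forall>m\<in>Poly_Mapping.keys p. \<not> face E (Poly_Mapping.keys m)"
  shows "(p :: ('v, 'k::comm_ring_1) mpoly) \<in> edge_ideal E"
proof -
  define c where "c m = Poly_Mapping.lookup p m" for m
  define em where "em m = (SOME e. e \<in> E \<and> e \<subseteq> Poly_Mapping.keys m)" for m :: "'v \<Rightarrow>\<^sub>0 nat"
  have em: "em m \<in> E \<and> em m \<subseteq> Poly_Mapping.keys m" if "m \<in> Poly_Mapping.keys p" for m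
    unfolding em_def by (rule someI_ex) (use H that in \<open>auto simp: face_def\<close>)
  define q where "q e = (\<Sum>m\<in>Poly_Mapping.keys p. if em m = e then Poly_Mapping.single (m - monom e) (c m) else 0)" for e
  have "(\<Sum>e\<in>E. q e * sqfree_mon e) = (\<Sum>e\<in>E. \<Sum>m\<in>Poly_Mapping.keys p. if em m = e then Poly_Mapping.single m (c m) else 0)"
  proof (rule sum.cong[OF refl])
    fix e assume e: "e \<in> E"
    have "q e * sqfree_mon e = (\<Sum>m\<in>Poly_Mapping.keys p. (if em m = e then Poly_Mapping.single (m - monom e) (c m) else 0) * Poly_Mapping.single (monom e) 1)"
      using fin e by (simp add: q_def sqfree_mon_eq sum_distrib_right)
    also have "\<dots> = (\<Sum>m\<in>Poly_Mapping.keys p. if em m = e then Poly_Mapping.single m (c m) else 0)"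
    proof (rule sum.cong[OF refl])
      fix m assume m: "m \<in> Poly_Mapping.keys p"
      show "(if em m = e then Poly_Mapping.single (m - monom e) (c m) else 0) * Poly_Mapping.single (monom e) 1 =
          (if em m = e then Poly_Mapping.single m (c m) else 0)"
        using monom_le[of e m] em[OF m] fin e by (auto simp: mult_single add.commute)
    qed
    finally show "q e * sqfree_mon e = (\<Sum>m\<in>Poly_Mapping.keys p. if em m = e then Poly_Mapping.single m (c m) else 0)" .
  qed
  also have "\<dots> = (\<Sum>m\<in>Poly_Mapping.keys p. \<Sum>e\<in>E. if em m = e then Poly_Mapping.single m (c m) else 0)"
    by (rule sum.swap)
  also have "\<dots> = (\<Sum>m\<in>Poly_Mapping.keys p. Poly_Mapping.single m (c m))"
    using em finE by (intro sum.cong) (auto simp: sum.delta)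
  also have "\<dots> = p" using poly_repr[of p] by (simp add: c_def)
  finally show ?thesis by (auto simp: edge_ideal_def)
qed

lemma ideal_iff:
  assumes "finite E" "\<forall>e\<in>E. finite e"
  shows "(p :: ('v, 'k::comm_ring_1) mpoly) \<in> edge_ideal E \<longleftrightarrow> (\<forall>m\<in>Poly_Mapping.keys p. \<not> face E (Poly_Mapping.keys m))"
  using ideal_imp[OF assms(2)] ideal_intro[OF assms] by blast


lemma face_mono: "face E Z \<Longrightarrow> S \<subseteq> Z \<Longrightarrow> face E S"
  by (auto simp: face_def)

lemma keys_u_h:
  fixes h :: "('v::finite, 'k::comm_ring_1) mpoly"
  assumes "h \<in> subring_vars Z" "U \<subseteq> Z" "m \<in> Poly_Mapping.keys (sqfree_mon U * h)"
  shows "U \<subseteq> Poly_Mapping.keys m \<and> Poly_Mapping.keys m \<subseteq> Z"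
proof -
  obtain m' where m': "m' \<in> Poly_Mapping.keys h" "m = monom U + m'"
    using assms(3) by (auto simp: sqfree_mon_eq keys_mult_single)
  then show ?thesis using assms(1,2) by (auto simp: keys_add_nat keys_monom subring_vars_def)
qed

lemma u_h_zero:
  fixes h :: "('v::finite, 'k::comm_ring_1) mpoly"
  assumes "sqfree_mon U * h = 0" shows "h = 0"
proof (rule poly_mapping_eqI)
  fix m
  have "Poly_Mapping.lookup (sqfree_mon U * h) (monom U + m) = Poly_Mapping.lookup h m"
    by (simp add: sqfree_mon_eq lookup_mult_single)
  then show "Poly_Mapping.lookup h m = Poly_Mapping.lookup 0 m" using assms by simp
qed

lemma decomp:
  fixes ds :: "('v::finite set \<times> 'v set) list" and E :: "'v set set"
  assumes H1: "\<forall>i<length ds. fst (ds!i) \<subseteq> snd (ds!i) \<and> face E (snd (ds!i))"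
    and H2: "\<forall>S. face E S \<longrightarrow> (\<exists>i<length ds. fst (ds!i) \<subseteq> S \<and> S \<subseteq> snd (ds!i))"
    and H3: "\<forall>S i j. i < length ds \<and> j < length ds \<and> fst (ds!i) \<subseteq> S \<and> S \<subseteq> snd (ds!i) \<and>
        fst (ds!j) \<subseteq> S \<and> S \<subseteq> snd (ds!j) \<longrightarrow> i = j"
  shows "sq_stanley_decomp TYPE('k::field) E ds"
proof -
  let ?n = "length ds"
  define U where "U i = fst (ds!i)" for i
  define Z where "Z i = snd (ds!i)" for i
  define inI where "inI i S \<longleftrightarrow> U i \<subseteq> S \<and> S \<subseteq> Z i" for i S
  have finE: "finite E" "\<forall>e\<in>E. finite e" by auto
  note II = ideal_iff[OF finE, where 'k='k]
  have inI_face: "face E S" if "i < ?n" "inI i S" for i S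
    using H1 that face_mono[of E "snd (ds!i)" S] by (auto simp: inI_def U_def Z_def)
  have sum_ind: "(\<Sum>i<?n. if inI i (Poly_Mapping.keys m) then X else 0) =
      (if face E (Poly_Mapping.keys m) then X else (0::('v, 'k) mpoly))" for m X
  proof (cases "face E (Poly_Mapping.keys m)")
    case True
    then obtain i0 where i0: "i0 < ?n" "inI i0 (Poly_Mapping.keys m)"
      using H2 by (auto simp: inI_def U_def Z_def)
    have "(\<Sum>i<?n. if inI i (Poly_Mapping.keys m) then X else 0) = (\<Sum>i<?n. if i = i0 then X else 0)"
      using H3 i0 by (intro sum.cong) (auto simp: inI_def U_def Z_def)
    also have "\<dots> = X" using i0 by simp
    finally show ?thesis using True by simp
  next
    case False
    then have "\<forall>i\<in>{..<?n}. (if inI i (Poly_Mapping.keys m) then X else 0) = 0" using inI_face by auto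
    then show ?thesis using False by (simp only: sum.neutral) simp
  qed
  have part1: "\<forall>i<?n. fst (ds ! i) \<subseteq> snd (ds ! i)" using H1 by blast
  have part2: "\<forall>f :: ('v, 'k) mpoly. \<exists>g. (\<forall>i<?n. \<exists>h\<in>subring_vars (snd (ds ! i)).
           g i = sqfree_mon (fst (ds ! i)) * h) \<and> f - (\<Sum>i<?n. g i) \<in> edge_ideal E"
  proof
    fix f :: "('v, 'k) mpoly"
    define c where "c m = Poly_Mapping.lookup f m" for m
    define g where "g i = (\<Sum>m\<in>Poly_Mapping.keys f. if inI i (Poly_Mapping.keys m) then Poly_Mapping.single m (c m) else 0)" for i
    define h where "h i = (\<Sum>m\<in>Poly_Mapping.keys f. if inI i (Poly_Mapping.keys m) then Poly_Mapping.single (m - monom (U i)) (c m) else 0)" for i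
    have gh: "g i = sqfree_mon (U i) * h i" for i
    proof -
      have "sqfree_mon (U i) * h i = (\<Sum>m\<in>Poly_Mapping.keys f. if inI i (Poly_Mapping.keys m) then Poly_Mapping.single (monom (U i) + (m - monom (U i))) (c m) else 0)"
        by (simp add: h_def sqfree_mon_eq sum_distrib_left mult_single if_distrib cong: if_cong)
      also have "\<dots> = g i"
        unfolding g_def by (intro sum.cong refl) (auto simp: monom_le inI_def)
      finally show ?thesis by simp
    qed
    have hsub: "h i \<in> subring_vars (Z i)" for i
    proof -
      have "Poly_Mapping.keys (h i) \<subseteq> (\<Union>m\<in>Poly_Mapping.keys f. Poly_Mapping.keys (if inI i (Poly_Mapping.keys m) then Poly_Mapping.single (m - monom (U i)) (c m) else (0::('v, 'k) mpoly)))"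
        unfolding h_def by (rule keys_sum)
      then show ?thesis unfolding subring_vars_def
        using keys_minus_monom by (fastforce simp: inI_def split: if_splits)
    qed
    have "(\<Sum>i<?n. g i) = (\<Sum>m\<in>Poly_Mapping.keys f. \<Sum>i<?n. if inI i (Poly_Mapping.keys m) then Poly_Mapping.single m (c m) else 0)"
      unfolding g_def by (rule sum.swap)
    also have "\<dots> = (\<Sum>m\<in>Poly_Mapping.keys f. if face E (Poly_Mapping.keys m) then Poly_Mapping.single m (c m) else 0)"
      by (simp only: sum_ind)
    finally have sg: "(\<Sum>i<?n. g i) = \<dots>" .
    have "f - (\<Sum>i<?n. g i) = (\<Sum>m\<in>Poly_Mapping.keys f. if face E (Poly_Mapping.keys m) then 0 else Poly_Mapping.single m (c m))"
    proof -
      have "f = (\<Sum>m\<in>Poly_Mapping.keys f. Poly_Mapping.single m (c m))" using poly_repr[of f] by (simp add: c_def)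
      then have "f - (\<Sum>i<?n. g i) = (\<Sum>m\<in>Poly_Mapping.keys f. Poly_Mapping.single m (c m) - (if face E (Poly_Mapping.keys m) then Poly_Mapping.single m (c m) else 0))"
        using sg by (simp add: sum_subtractf)
      also have "\<dots> = (\<Sum>m\<in>Poly_Mapping.keys f. if face E (Poly_Mapping.keys m) then 0 else Poly_Mapping.single m (c m))"
        by (intro sum.cong) auto
      finally show ?thesis .
    qed
    moreover have "(\<Sum>m\<in>Poly_Mapping.keys f. if face E (Poly_Mapping.keys m) then 0 else Poly_Mapping.single m (c m)) \<in> edge_ideal E"
    proof -
      have "Poly_Mapping.keys (\<Sum>m\<in>Poly_Mapping.keys f. if face E (Poly_Mapping.keys m) then 0 else Poly_Mapping.single m (c m))
          \<subseteq> (\<Union>m\<in>Poly_Mapping.keys f. Poly_Mapping.keys (if face E (Poly_Mapping.keys m) then 0 else Poly_Mapping.single m (c m :: 'k)))"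
        by (rule keys_sum)
      then show ?thesis unfolding II by (auto split: if_splits)
    qed
    ultimately have "f - (\<Sum>i<?n. g i) \<in> edge_ideal E" by simp
    moreover have "\<forall>i<?n. \<exists>h\<in>subring_vars (snd (ds ! i)). g i = sqfree_mon (fst (ds ! i)) * h"
      using gh hsub by (auto simp: U_def Z_def)
    ultimately show "\<exists>g. (\<forall>i<?n. \<exists>h\<in>subring_vars (snd (ds ! i)).
           g i = sqfree_mon (fst (ds ! i)) * h) \<and> f - (\<Sum>i<?n. g i) \<in> edge_ideal E" by blast
  qed
  have part3: "\<forall>g :: nat \<Rightarrow> ('v, 'k) mpoly. (\<forall>i<?n. \<exists>h\<in>subring_vars (snd (ds ! i)).
           g i = sqfree_mon (fst (ds ! i)) * h) \<and>
         (\<Sum>i<?n. g i) \<in> edge_ideal E \<longrightarrow> (\<forall>i<?n. g i \<in> edge_ideal E)"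
  proof (intro allI impI)
    fix g :: "nat \<Rightarrow> ('v, 'k) mpoly" and i
    assume A: "(\<forall>i<?n. \<exists>h\<in>subring_vars (snd (ds ! i)). g i = sqfree_mon (fst (ds ! i)) * h) \<and>
         (\<Sum>i<?n. g i) \<in> edge_ideal E" and i: "i < ?n"
    have kg: "inI j (Poly_Mapping.keys m)" if jm: "j < ?n" "m \<in> Poly_Mapping.keys (g j)" for j m
    proof -
      obtain h where "h \<in> subring_vars (Z j)" "g j = sqfree_mon (U j) * h"
        using A jm(1) by (auto simp: U_def Z_def)
      then show ?thesis using keys_u_h[of h "Z j" "U j" m] H1 jm by (auto simp: inI_def U_def Z_def)
    qed
    have "g i = 0"
    proof (rule ccontr)
      assume "g i \<noteq> 0"
      then obtain m where m: "m \<in> Poly_Mapping.keys (g i)" by (metis all_not_in_conv keys_eq_empty)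
      have mi: "inI i (Poly_Mapping.keys m)" using kg[OF i m] .
      have "Poly_Mapping.lookup (\<Sum>j<?n. g j) m = (\<Sum>j<?n. Poly_Mapping.lookup (g j) m)" by (simp add: lookup_sum)
      also have "\<dots> = (\<Sum>j<?n. if j = i then Poly_Mapping.lookup (g j) m else 0)"
      proof (intro sum.cong refl)
        fix j assume j: "j \<in> {..<?n}"
        show "Poly_Mapping.lookup (g j) m = (if j = i then Poly_Mapping.lookup (g j) m else 0)"
        proof (cases "j = i")
          case False
          have "m \<notin> Poly_Mapping.keys (g j)"
          proof
            assume "m \<in> Poly_Mapping.keys (g j)"
            then have "inI j (Poly_Mapping.keys m)" using kg j by auto
            then show False using H3 mi i j False by (auto simp: inI_def U_def Z_def)
          qed
          then show ?thesis using False by (simp add: in_keys_iff)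
        qed simp
      qed
      also have "\<dots> = Poly_Mapping.lookup (g i) m" using i by simp
      finally have "m \<in> Poly_Mapping.keys (\<Sum>j<?n. g j)" using m by (simp add: in_keys_iff)
      then have "\<not> face E (Poly_Mapping.keys m)" using A II by blast
      then show False using inI_face[OF i mi] by simp
    qed
    then show "g i \<in> edge_ideal E" by (simp add: II)
  qed
  have part4: "\<forall>i<?n. \<forall>h :: ('v, 'k) mpoly. h \<in> subring_vars (snd (ds ! i)) \<and>
         sqfree_mon (fst (ds ! i)) * h \<in> edge_ideal E \<longrightarrow> h = 0"
  proof (intro allI impI)
    fix i and h :: "('v, 'k) mpoly"
    assume i: "i < ?n" and A: "h \<in> subring_vars (snd (ds ! i)) \<and> sqfree_mon (fst (ds ! i)) * h \<in> edge_ideal E"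
    have "Poly_Mapping.keys (sqfree_mon (fst (ds ! i)) * h) = {}"
    proof (rule ccontr)
      assume "Poly_Mapping.keys (sqfree_mon (fst (ds ! i)) * h) \<noteq> {}"
      then obtain m where m: "m \<in> Poly_Mapping.keys (sqfree_mon (fst (ds ! i)) * h)" by blast
      then have "inI i (Poly_Mapping.keys m)" using keys_u_h[of h "snd (ds!i)" "fst (ds!i)" m] A H1 i
        by (auto simp: inI_def U_def Z_def)
      then have "face E (Poly_Mapping.keys m)" using inI_face i by blast
      then show False using A m II by blast
    qed
    then show "h = 0" using u_h_zero by auto
  qed
  show ?thesis unfolding sq_stanley_decomp_def using part1 part2 part3 part4 by blast
qed

theorem corollary5p12:
  fixes V :: "'v::finite set" and E :: "'v set set"
  assumes "simple_graph V E"
    and "planar V (complement_edges V E)"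
  shows "sreg TYPE('k::field) E \<le> 3"
proof -
  note sg = assms(1) and pl = assms(2)
  have Ep: "e \<subseteq> V \<and> card e = 2" if "e \<in> E" for e using sg that by (auto simp: simple_graph_def)
  define clq where "clq B \<longleftrightarrow> B \<subseteq> V \<and> (\<forall>p\<in>B. \<forall>q\<in>B. p \<noteq> q \<longrightarrow> {p,q} \<notin> E)" for B
  have down: "clq A" if "clq B" "A \<subseteq> B" for A B using that by (auto simp: clq_def)
  have apex: "card {x. x \<notin> T \<and> clq (insert x T)} \<le> 2" if T: "clq T" "card T = 3" for T
  proof (rule ccontr)
    let ?X = "{x. x \<notin> T \<and> clq (insert x T)}"
    assume "\<not> card ?X \<le> 2"
    then have "3 \<le> card ?X" by linarith
    then obtain Y where Y: "Y \<subseteq> ?X" "card Y = 3" by (meson obtain_subset_with_card_n)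
    obtain x0 x1 x2 where xs: "Y = {x0, x1, x2}" "x0 \<noteq> x1" "x1 \<noteq> x2" "x0 \<noteq> x2"
      using Y(2) by (auto simp: card_3_iff)
    obtain t0 t1 t2 where ts: "T = {t0, t1, t2}" "t0 \<noteq> t1" "t1 \<noteq> t2" "t0 \<noteq> t2"
      using T(2) by (auto simp: card_3_iff)
    define a where "a i = (if i = 0 then t0 else if i = 1 then t1 else t2)" for i :: nat
    define b where "b i = (if i = 0 then x0 else if i = 1 then x1 else x2)" for i :: nat
    have three: "i < 3 \<longleftrightarrow> i = 0 \<or> i = 1 \<or> i = 2" for i :: nat by auto
    have aT: "a i \<in> T" if "i < 3" for i using that ts by (auto simp: a_def three)
    have bY: "b i \<in> Y" if "i < 3" for i using that xs by (auto simp: b_def three)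
    show False
    proof (rule planar_no_K33[OF pl, of a b])
      show "inj_on a {..<3}" using ts by (auto simp: inj_on_def a_def three)
      show "inj_on b {..<3}" using xs by (auto simp: inj_on_def b_def three)
      show "a i \<noteq> b j" if "i < 3" "j < 3" for i j using aT[OF that(1)] bY[OF that(2)] Y(1) by auto
      show "a i \<in> V" if "i < 3" for i using aT[OF that] T(1) by (auto simp: clq_def)
      show "b j \<in> V" if "j < 3" for j using bY[OF that] Y(1) by (auto simp: clq_def)
      show "{a i, b j} \<in> complement_edges V E" if "i < 3" "j < 3" for i j
      proof -
        have c: "clq (insert (b j) T)" "b j \<notin> T" using bY[OF that(2)] Y(1) by auto
        have ai: "a i \<in> T" using aT[OF that(1)] .
        have v1: "a i \<in> V" using ai T(1) unfolding clq_def by blast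
        have v2: "b j \<in> V" using c(1) unfolding clq_def by blast
        have ne: "a i \<noteq> b j" using ai c(2) by metis
        have "\<forall>p\<in>insert (b j) T. \<forall>q\<in>insert (b j) T. p \<noteq> q \<longrightarrow> {p,q} \<notin> E" using c(1) unfolding clq_def by blast
        then have nE: "{a i, b j} \<notin> E" using ai ne by blast
        show ?thesis unfolding complement_edges_def
          by (rule CollectI, rule exI[of _ "a i"], rule exI[of _ "b j"]) (simp add: v1 v2 ne nE)
      qed
    qed
  qed
  interpret cliq clq by unfold_locales (use down apex in auto)
  obtain \<phi> where phi: "\<And>B. clq B \<Longrightarrow> fst (\<phi> B) \<subseteq> B \<and> B \<subseteq> snd (\<phi> B) \<and> clq (snd (\<phi> B)) \<and> card (fst (\<phi> B)) \<le> 3 \<and>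
        (\<forall>B'. fst (\<phi> B) \<subseteq> B' \<and> B' \<subseteq> snd (\<phi> B) \<longrightarrow> \<phi> B' = \<phi> B)"
    using partition_exists by blast
  have phiA: "fst (\<phi> B) \<subseteq> B" and phiB: "B \<subseteq> snd (\<phi> B)" and phiC: "clq (snd (\<phi> B))"
    and phiD: "card (fst (\<phi> B)) \<le> 3" if "clq B" for B using phi[OF that] by blast+
  have phiE: "\<phi> B' = \<phi> B" if "clq B" "fst (\<phi> B) \<subseteq> B'" "B' \<subseteq> snd (\<phi> B)" for B B'
    using phi[OF that(1)] that(2,3) by blast
  have faceclq: "face E S \<longleftrightarrow> clq (S \<inter> V)" for S
  proof
    assume "face E S" then show "clq (S \<inter> V)" by (auto simp: face_def clq_def)
  next
    assume c: "clq (S \<inter> V)"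
    show "face E S" unfolding face_def
    proof (intro ballI notI)
      fix e assume e: "e \<in> E" "e \<subseteq> S"
      obtain p q where "e = {p, q}" "p \<noteq> q" using Ep[OF e(1)] by (auto simp: card_2_iff)
      then show False using c e Ep[OF e(1)] by (auto simp: clq_def)
    qed
  qed
  define \<psi> where "\<psi> S = (fst (\<phi> (S \<inter> V)), snd (\<phi> (S \<inter> V)) \<union> - V)" for S
  define P where "P = \<psi> ` {S. face E S}"
  obtain ds where ds: "set ds = P" "distinct ds" using finite_distinct_list[of P] by auto
  have inP: "\<exists>S. face E S \<and> ds ! i = \<psi> S" if "i < length ds" for i
    using nth_mem[OF that] ds(1) unfolding P_def by blast
  have snd_V: "snd (\<phi> B) \<subseteq> V" if "clq B" for B using phiC[OF that] unfolding clq_def by blast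
  have H1: "\<forall>i<length ds. fst (ds!i) \<subseteq> snd (ds!i) \<and> face E (snd (ds!i))"
  proof (intro allI impI)
    fix i assume "i < length ds"
    then obtain S where S: "face E S" "ds ! i = \<psi> S" using inP by blast
    then have c: "clq (S \<inter> V)" using faceclq by blast
    have eq: "(snd (\<phi> (S \<inter> V)) \<union> - V) \<inter> V = snd (\<phi> (S \<inter> V))" using snd_V[OF c] by blast
    have "face E (snd (\<phi> (S \<inter> V)) \<union> - V)" unfolding faceclq eq using phiC[OF c] .
    then have "face E (snd (ds ! i))" using S(2) unfolding \<psi>_def by simp
    moreover have "fst (ds!i) \<subseteq> snd (ds!i)" using S(2) phiA[OF c] phiB[OF c] unfolding \<psi>_def by auto
    ultimately show "fst (ds!i) \<subseteq> snd (ds!i) \<and> face E (snd (ds!i))" by blast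
  qed
  have H2: "\<forall>S. face E S \<longrightarrow> (\<exists>i<length ds. fst (ds!i) \<subseteq> S \<and> S \<subseteq> snd (ds!i))"
  proof (intro allI impI)
    fix S assume S: "face E S"
    then have c: "clq (S \<inter> V)" using faceclq by blast
    have "\<psi> S \<in> set ds" using S ds(1) unfolding P_def by blast
    then obtain i where i: "i < length ds" "ds ! i = \<psi> S" by (auto simp: in_set_conv_nth)
    have "fst (ds!i) \<subseteq> S \<and> S \<subseteq> snd (ds!i)" using phiA[OF c] phiB[OF c] i(2) unfolding \<psi>_def by auto
    then show "\<exists>i<length ds. fst (ds!i) \<subseteq> S \<and> S \<subseteq> snd (ds!i)" using i by blast
  qed
  have H3: "\<forall>S i j. i < length ds \<and> j < length ds \<and> fst (ds!i) \<subseteq> S \<and> S \<subseteq> snd (ds!i) \<and>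
        fst (ds!j) \<subseteq> S \<and> S \<subseteq> snd (ds!j) \<longrightarrow> i = j"
  proof (intro allI impI)
    fix S i j assume A: "i < length ds \<and> j < length ds \<and> fst (ds!i) \<subseteq> S \<and> S \<subseteq> snd (ds!i) \<and>
        fst (ds!j) \<subseteq> S \<and> S \<subseteq> snd (ds!j)"
    have key: "\<phi> (S \<inter> V) = \<phi> (S1 \<inter> V)" if "face E S1" "fst (\<psi> S1) \<subseteq> S" "S \<subseteq> snd (\<psi> S1)" for S1
    proof -
      have c: "clq (S1 \<inter> V)" using faceclq that(1) by blast
      have "fst (\<phi> (S1 \<inter> V)) \<subseteq> S \<inter> V" using that(2) phiA[OF c] unfolding \<psi>_def by auto
      moreover have "S \<inter> V \<subseteq> snd (\<phi> (S1 \<inter> V))" using that(3) unfolding \<psi>_def by auto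
      ultimately show ?thesis using phiE[OF c] by blast
    qed
    have Ai: "i < length ds" "fst (ds!i) \<subseteq> S" "S \<subseteq> snd (ds!i)" using A by auto
    have Aj: "j < length ds" "fst (ds!j) \<subseteq> S" "S \<subseteq> snd (ds!j)" using A by auto
    obtain S1 where S1: "face E S1" "ds ! i = \<psi> S1" using inP[OF Ai(1)] by blast
    obtain S2 where S2: "face E S2" "ds ! j = \<psi> S2" using inP[OF Aj(1)] by blast
    have e1: "\<phi> (S \<inter> V) = \<phi> (S1 \<inter> V)" by (rule key[OF S1(1)]) (use Ai S1(2) in auto)
    have e2: "\<phi> (S \<inter> V) = \<phi> (S2 \<inter> V)" by (rule key[OF S2(1)]) (use Aj S2(2) in auto)
    have "ds ! i = ds ! j" unfolding S1(2) S2(2) \<psi>_def e1[symmetric] e2[symmetric] ..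
    then show "i = j" using nth_eq_iff_index_eq[OF ds(2) Ai(1) Aj(1)] by simp
  qed
  have dec: "sq_stanley_decomp TYPE('k) E ds" using decomp[OF H1 H2 H3] .
  have reg: "stanley_reg ds \<le> 3"
  proof -
    have "\<forall>p\<in>set ds. card (fst p) \<le> 3"
    proof
      fix p assume "p \<in> set ds"
      then obtain S where S: "face E S" "p = \<psi> S" using ds(1) by (auto simp: P_def)
      then have c: "clq (S \<inter> V)" using faceclq by blast
      show "card (fst p) \<le> 3" using phiD[OF c] S(2) unfolding \<psi>_def by simp
    qed
    then show ?thesis unfolding stanley_reg_def by (auto simp: Max_le_iff)
  qed
  have "sreg TYPE('k) E \<le> stanley_reg ds"
    unfolding sreg_def by (rule Least_le) (use dec in blast)
  then show ?thesis using reg by linarith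
qed

end
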